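(* The barycentre of a simplex in a real normed linear space is a relative interior point of that simplex.
   Context: The setting is Bishop's constructive mathematics (intuitionistic logic). Vectors $v_1,\ldots,v_n$ are linearly independent if $\|\sum_i\mu_iv_i\|>0$ whenever $\sum_i|\mu_i|>0$; points $a_1,\ldots,a_{n+1}$ are affinely independent if $a_k-a_{n+1}$ ($1\le k\le n$) are linearly independent; the $n$-simplex with (affinely independent) vertices $a_1,\ldots,a_{n+1}$ is their convex hull, and its barycentre is $\frac{1}{n+1}\sum_{k=1}^{n+1}a_k$. $\mathsf{relint}(S)=\{x\in S:\exists r>0\,(B_X(x,r)\cap\mathsf{aff}(S)\subset S)\}$, with $B_X$ the open ball and $\mathsf{aff}$ the affine hull; its elements are relative interior points. *)

theory Defs
  imports "HOL-Analysis.Analysis"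
begin

definition lin_indep_c :: "nat \<Rightarrow> (nat \<Rightarrow> 'a::real_normed_vector) \<Rightarrow> bool" where
  "lin_indep_c m v \<longleftrightarrow>
     (\<forall>\<mu> :: nat \<Rightarrow> real. (\<Sum>i<m. \<bar>\<mu> i\<bar>) > 0 \<longrightarrow> norm (\<Sum>i<m. \<mu> i *\<^sub>R v i) > 0)"

definition aff_indep_c :: "nat \<Rightarrow> (nat \<Rightarrow> 'a::real_normed_vector) \<Rightarrow> bool" where
  "aff_indep_c n a \<longleftrightarrow> lin_indep_c n (\<lambda>k. a k - a n)"

definition simplex_c :: "nat \<Rightarrow> (nat \<Rightarrow> 'a::real_normed_vector) \<Rightarrow> 'a set" where
  "simplex_c n a = convex hull (a ` {..n})"

definition barycentre :: "nat \<Rightarrow> (nat \<Rightarrow> 'a::real_normed_vector) \<Rightarrow> 'a" where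
  "barycentre n a = (1 / real (n + 1)) *\<^sub>R (\<Sum>k\<le>n. a k)"

definition relint :: "'a::real_normed_vector set \<Rightarrow> 'a set" where
  "relint S = {x \<in> S. \<exists>r>0. ball x r \<inter> affine hull S \<subseteq> S}"

end

theory Submission imports Defs begin

lemma lin_bound:
  fixes v :: "nat \<Rightarrow> 'a::real_normed_vector"
  assumes li: "lin_indep_c m v"
  shows "\<exists>c>0. \<forall>\<mu>. c * (\<Sum>i<m. \<bar>\<mu> i\<bar>) \<le> norm (\<Sum>i<m. \<mu> i *\<^sub>R v i)"
proof (rule ccontr)
  define S where "S = (\<lambda>\<mu>::nat\<Rightarrow>real. \<Sum>i<m. \<bar>\<mu> i\<bar>)"
  define N where "N = (\<lambda>\<mu>::nat\<Rightarrow>real. norm (\<Sum>i<m. \<mu> i *\<^sub>R v i))"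
  assume neg: "\<not> ?thesis"
  have "\<exists>\<mu>. N \<mu> < (1 / (real k + 1)) * S \<mu>" for k :: nat
  proof -
    have pos: "(1 / (real k + 1)) > 0" by simp
    have "\<not> (\<forall>\<mu>. (1 / (real k + 1)) * S \<mu> \<le> N \<mu>)"
      unfolding S_def N_def using neg pos by blast
    then show ?thesis by (simp add: not_le)
  qed
  then have "\<forall>k::nat. \<exists>\<mu>. N \<mu> < (1 / (real k + 1)) * S \<mu>" by blast
  then obtain \<mu> where mu: "\<And>k. N (\<mu> k) < (1 / (real k + 1)) * S (\<mu> k)" by metis
  have Spos: "S (\<mu> k) > 0" for k
  proof -
    have "N (\<mu> k) \<ge> 0" unfolding N_def by simp
    with mu[of k] have "0 < (1 / (real k + 1)) * S (\<mu> k)" by linarith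
    moreover have "real k + 1 > 0" by simp
    ultimately show ?thesis by (auto simp: zero_less_divide_iff zero_less_mult_iff)
  qed
  define \<nu> where "\<nu> = (\<lambda>k i. \<mu> k i / S (\<mu> k))"
  have Snu: "S (\<nu> k) = 1" for k
  proof -
    have "S (\<nu> k) = (\<Sum>i<m. \<bar>\<mu> k i\<bar> / S (\<mu> k))"
      unfolding S_def \<nu>_def using Spos[of k] by (simp add: abs_div)
    also have "\<dots> = S (\<mu> k) / S (\<mu> k)" unfolding S_def by (rule sum_divide_distrib[symmetric])
    finally show ?thesis using Spos[of k] by simp
  qed
  have Nnu: "N (\<nu> k) < 1 / (real k + 1)" for k
  proof -
    have "(\<Sum>i<m. \<nu> k i *\<^sub>R v i) = (1 / S (\<mu> k)) *\<^sub>R (\<Sum>i<m. \<mu> k i *\<^sub>R v i)"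
      unfolding \<nu>_def by (simp add: scaleR_sum_right)
    then have "N (\<nu> k) = N (\<mu> k) / S (\<mu> k)" unfolding N_def using Spos[of k] by simp
    also have "\<dots> < (1 / (real k + 1)) * S (\<mu> k) / S (\<mu> k)"
      by (rule divide_strict_right_mono[OF mu[of k] Spos[of k]])
    also have "\<dots> = 1 / (real k + 1)" using Spos[of k] by simp
    finally show ?thesis .
  qed
  have bnd: "\<bar>\<nu> k i\<bar> \<le> 1" if "i < m" for k i
  proof -
    have "\<bar>\<nu> k i\<bar> \<le> S (\<nu> k)" unfolding S_def
      using that by (intro member_le_sum) auto
    then show ?thesis using Snu by simp
  qed
  have "\<forall>\<delta>\<subseteq>{..<m}. \<exists>l::nat\<Rightarrow>real. \<exists>r::nat\<Rightarrow>nat.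
    strict_mono r \<and> (\<forall>\<epsilon>>0. eventually (\<lambda>n. \<forall>i\<in>\<delta>. dist (\<nu> (r n) i) (l i) < \<epsilon>) sequentially)"
  proof (rule compact_lemma_general[where proj = "\<lambda>x k. x k" and unproj = "\<lambda>x. x"])
    fix k assume "k \<in> {..<m}"
    then show "bounded ((\<lambda>x. x k) ` range \<nu>)"
      using bnd by (auto simp: bounded_iff intro!: exI[of _ 1])
  qed auto
  then obtain l :: "nat \<Rightarrow> real" and r where r: "strict_mono r"
    and ev: "\<And>\<epsilon>. \<epsilon>>0 \<Longrightarrow> eventually (\<lambda>n. \<forall>i\<in>{..<m}. dist (\<nu> (r n) i) (l i) < \<epsilon>) sequentially"
    by blast
  have lim: "(\<lambda>n. \<nu> (r n) i) \<longlonglongrightarrow> l i" if "i < m" for i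
  proof (rule tendstoI)
    fix e :: real assume "e > 0"
    from ev[OF this] show "eventually (\<lambda>n. dist (\<nu> (r n) i) (l i) < e) sequentially"
      by eventually_elim (use that in auto)
  qed
  have "(\<lambda>n. S (\<nu> (r n))) \<longlonglongrightarrow> S l"
    unfolding S_def by (intro tendsto_sum tendsto_rabs lim) auto
  moreover have "(\<lambda>n. S (\<nu> (r n))) \<longlonglongrightarrow> 1" by (simp add: Snu)
  ultimately have Sl: "S l = 1" using LIMSEQ_unique by blast
  have "(\<lambda>n. N (\<nu> (r n))) \<longlonglongrightarrow> N l"
    unfolding N_def by (intro tendsto_norm tendsto_sum tendsto_scaleR lim tendsto_const) auto
  moreover have "(\<lambda>n. N (\<nu> (r n))) \<longlonglongrightarrow> 0"
  proof (rule tendsto_sandwich[of "\<lambda>_. 0" _ _ "\<lambda>n. 1 / (real n + 1)"])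
    show "\<forall>\<^sub>F n in sequentially. 0 \<le> N (\<nu> (r n))" unfolding N_def by simp
    have "N (\<nu> (r n)) \<le> 1 / (real n + 1)" for n
    proof -
      have "n \<le> r n" using r by (simp add: seq_suble)
      then have "1 / (real (r n) + 1) \<le> 1 / (real n + 1)"
        by (intro divide_left_mono) auto
      then show ?thesis using Nnu[of "r n"] by linarith
    qed
    then show "\<forall>\<^sub>F n in sequentially. N (\<nu> (r n)) \<le> 1 / (real n + 1)" by simp
    show "(\<lambda>n. 1 / (real n + 1)) \<longlonglongrightarrow> 0" using LIMSEQ_inverse_real_of_nat by (simp add: inverse_eq_divide add.commute)
  qed simp
  ultimately have "N l = 0" using LIMSEQ_unique by blast
  moreover have "N l > 0" using li Sl unfolding lin_indep_c_def S_def N_def by auto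
  ultimately show False by simp
qed


lemma aff_sub:
  fixes a :: "nat \<Rightarrow> 'a::real_normed_vector"
  shows "affine hull (a ` {..n}) \<subseteq> {a n + (\<Sum>i<n. \<mu> i *\<^sub>R (a i - a n)) | \<mu>. True}"
proof (rule hull_minimal)
  show "a ` {..n} \<subseteq> {a n + (\<Sum>i<n. \<mu> i *\<^sub>R (a i - a n)) | \<mu>. True}"
  proof
    fix x assume "x \<in> a ` {..n}"
    then obtain k where k: "k \<le> n" "x = a k" by auto
    show "x \<in> {a n + (\<Sum>i<n. \<mu> i *\<^sub>R (a i - a n)) | \<mu>. True}"
    proof (cases "k = n")
      case True
      then show ?thesis using k by (auto intro!: exI[of _ "\<lambda>_. 0"])
    next
      case False
      then have "k < n" using k by simp
      have "(\<Sum>i<n. (if i = k then 1 else 0) *\<^sub>R (a i - a n)) = (\<Sum>i<n. if i = k then a i - a n else 0)"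
        by (intro sum.cong) auto
      also have "\<dots> = a k - a n" using \<open>k < n\<close> by simp
      finally have "(\<Sum>i<n. (if i = k then 1 else 0) *\<^sub>R (a i - a n)) = a k - a n" .
      then show ?thesis using k
        by (auto intro!: exI[of _ "\<lambda>i. if i = k then 1 else 0"])
    qed
  qed
  show "affine {a n + (\<Sum>i<n. \<mu> i *\<^sub>R (a i - a n)) | \<mu>. True}"
    unfolding affine_def
  proof (clarify)
    fix \<mu> \<nu> :: "nat \<Rightarrow> real" and u v :: real assume "u + v = 1"
    have gen: "u *\<^sub>R (x + (\<Sum>i<n. \<mu> i *\<^sub>R w i)) + v *\<^sub>R (x + (\<Sum>i<n. \<nu> i *\<^sub>R w i))
      = x + (\<Sum>i<n. (u * \<mu> i + v * \<nu> i) *\<^sub>R w i)" for x :: 'a and w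
    proof -
      have "u *\<^sub>R (x + (\<Sum>i<n. \<mu> i *\<^sub>R w i)) + v *\<^sub>R (x + (\<Sum>i<n. \<nu> i *\<^sub>R w i))
        = (u + v) *\<^sub>R x + ((\<Sum>i<n. (u * \<mu> i) *\<^sub>R w i) + (\<Sum>i<n. (v * \<nu> i) *\<^sub>R w i))"
        by (simp add: scaleR_add_right scaleR_sum_right scaleR_add_left)
      also have "\<dots> = x + (\<Sum>i<n. (u * \<mu> i + v * \<nu> i) *\<^sub>R w i)"
        using \<open>u + v = 1\<close> by (simp add: sum.distrib[symmetric] scaleR_add_left)
      finally show ?thesis .
    qed
    then have EQ: "u *\<^sub>R (a n + (\<Sum>i<n. \<mu> i *\<^sub>R (a i - a n))) + v *\<^sub>R (a n + (\<Sum>i<n. \<nu> i *\<^sub>R (a i - a n)))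
      = a n + (\<Sum>i<n. (u * \<mu> i + v * \<nu> i) *\<^sub>R (a i - a n))" .
    show "\<exists>\<mu>'. u *\<^sub>R (a n + (\<Sum>i<n. \<mu> i *\<^sub>R (a i - a n))) + v *\<^sub>R (a n + (\<Sum>i<n. \<nu> i *\<^sub>R (a i - a n)))
      = a n + (\<Sum>i<n. \<mu>' i *\<^sub>R (a i - a n)) \<and> True"
      by (intro exI[of _ "\<lambda>i. u * \<mu> i + v * \<nu> i"] conjI TrueI) (simp only: EQ)
  qed
qed

lemma in_simplex:
  fixes a :: "nat \<Rightarrow> 'a::real_normed_vector"
  assumes "\<And>k. k \<le> n \<Longrightarrow> 0 \<le> w k" "(\<Sum>k\<le>n. w k) = 1"
  shows "(\<Sum>k\<le>n. w k *\<^sub>R a k) \<in> simplex_c n a"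
  unfolding simplex_c_def
  by (rule convex_sum) (use assms in \<open>auto intro: hull_inc\<close>)

lemma bary_aux:
  fixes x y s :: "'a::real_normed_vector"
  assumes "x = t *\<^sub>R x + t *\<^sub>R y"
  shows "t *\<^sub>R (s + x) = x + t *\<^sub>R (s - y)"
proof -
  have "x + t *\<^sub>R (s - y) = (t *\<^sub>R x + t *\<^sub>R y) + t *\<^sub>R (s - y)"
    by (rule arg_cong[where f="\<lambda>z. z + t *\<^sub>R (s - y)", OF assms])
  then show ?thesis by (simp add: algebra_simps)
qed

lemma bary_eq:
  fixes a :: "nat \<Rightarrow> 'a::real_normed_vector"
  shows "barycentre n a = a n + (\<Sum>i<n. (1 / real (n+1)) *\<^sub>R (a i - a n))"
proof -
  have 1: "(\<Sum>i<n. (1 / real (n+1)) *\<^sub>R (a i - a n)) = (1 / real (n+1)) *\<^sub>R ((\<Sum>i<n. a i) - real n *\<^sub>R a n)"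
    by (simp add: scaleR_sum_right[symmetric] sum_subtractf sum_constant_scaleR)
  have 2: "(\<Sum>k\<le>n. a k) = (\<Sum>i<n. a i) + a n" by (simp add: lessThan_Suc_atMost[symmetric])
  have 3: "a n = (1 / real (n+1)) *\<^sub>R a n + (1 / real (n+1)) *\<^sub>R (real n *\<^sub>R a n)"
  proof -
    have "(1 / real (n+1)) + (1 / real (n+1)) * real n = 1" by (simp add: field_simps)
    then have "a n = ((1 / real (n+1)) + (1 / real (n+1)) * real n) *\<^sub>R a n" by simp
    then show ?thesis by (simp only: scaleR_add_left scaleR_scaleR)
  qed
  show ?thesis unfolding barycentre_def 1 2 by (rule bary_aux[OF 3])
qed

theorem corollary23:
  fixes a :: "nat \<Rightarrow> 'a::real_normed_vector" and n :: nat
  assumes "aff_indep_c n a"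
  shows "barycentre n a \<in> relint (simplex_c n a)"
proof -
  define v where "v = (\<lambda>k. a k - a n)"
  obtain c where c: "c > 0" "\<And>\<mu>. c * (\<Sum>i<n. \<bar>\<mu> i\<bar>) \<le> norm (\<Sum>i<n. \<mu> i *\<^sub>R v i)"
    using lin_bound[of n v] assms unfolding aff_indep_c_def v_def by blast
  have conv: "a n + (\<Sum>i<n. \<mu> i *\<^sub>R v i) \<in> simplex_c n a"
    if pos: "\<And>i. i < n \<Longrightarrow> 0 \<le> \<mu> i" and le: "(\<Sum>i<n. \<mu> i) \<le> 1" for \<mu>
  proof -
    define w where "w = (\<lambda>k. if k < n then \<mu> k else 1 - (\<Sum>i<n. \<mu> i))"
    have "(\<Sum>k\<le>n. w k) = 1"
      by (simp add: w_def lessThan_Suc_atMost[symmetric])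
    moreover have "\<And>k. k \<le> n \<Longrightarrow> 0 \<le> w k" using pos le by (auto simp: w_def)
    moreover have "(\<Sum>k\<le>n. w k *\<^sub>R a k) = a n + (\<Sum>i<n. \<mu> i *\<^sub>R v i)"
      by (simp add: w_def lessThan_Suc_atMost[symmetric] v_def scaleR_diff_right sum_subtractf
          scaleR_sum_left[symmetric] algebra_simps)
    ultimately show ?thesis using in_simplex[of n w a] by simp
  qed
  define b where "b = barycentre n a"
  have b: "b = a n + (\<Sum>i<n. (1 / real (n+1)) *\<^sub>R v i)"
    unfolding b_def v_def by (rule bary_eq)
  have bin: "b \<in> simplex_c n a" unfolding b
    by (rule conv) (auto simp: field_simps)
  have "ball b (c / real (n+1)) \<inter> affine hull (simplex_c n a) \<subseteq> simplex_c n a"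
  proof
    fix y assume y: "y \<in> ball b (c / real (n+1)) \<inter> affine hull (simplex_c n a)"
    then have "y \<in> affine hull (a ` {..n})" unfolding simplex_c_def by (simp add: affine_hull_convex_hull)
    then obtain \<mu> where ym: "y = a n + (\<Sum>i<n. \<mu> i *\<^sub>R v i)" using aff_sub[of a n] unfolding v_def by blast
    have "y - b = (\<Sum>i<n. (\<mu> i - 1 / real (n+1)) *\<^sub>R v i)"
      unfolding ym b by (simp add: sum_subtractf scaleR_diff_left)
    moreover have "norm (y - b) < c / real (n+1)" using y by (simp add: dist_norm norm_minus_commute)
    ultimately have "c * (\<Sum>i<n. \<bar>\<mu> i - 1 / real (n+1)\<bar>) < c / real (n+1)"
      using c(2)[of "\<lambda>i. \<mu> i - 1 / real (n+1)"] by simp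
    then have "c * (\<Sum>i<n. \<bar>\<mu> i - 1 / real (n+1)\<bar>) < c * (1 / real (n+1))" by simp
    then have D: "(\<Sum>i<n. \<bar>\<mu> i - 1 / real (n+1)\<bar>) < 1 / real (n+1)"
      using c(1) mult_less_cancel_left_pos by blast
    show "y \<in> simplex_c n a" unfolding ym
    proof (rule conv)
      fix i assume "i < n"
      then have "\<bar>\<mu> i - 1 / real (n+1)\<bar> \<le> (\<Sum>i<n. \<bar>\<mu> i - 1 / real (n+1)\<bar>)"
        by (intro member_le_sum) auto
      with D show "0 \<le> \<mu> i" by linarith
    next
      have "(\<Sum>i<n. \<mu> i) = (\<Sum>i<n. \<mu> i - 1 / real (n+1)) + real n / real (n+1)"
        by (simp add: sum_subtractf)
      also have "\<dots> \<le> (\<Sum>i<n. \<bar>\<mu> i - 1 / real (n+1)\<bar>) + real n / real (n+1)"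
        by (intro add_right_mono sum_mono) auto
      also have "\<dots> \<le> 1 / real (n+1) + real n / real (n+1)" using D by simp
      also have "\<dots> = 1" by (simp add: field_simps)
      finally show "(\<Sum>i<n. \<mu> i) \<le> 1" .
    qed
  qed
  then show ?thesis using bin c(1) unfolding relint_def b_def[symmetric]
    by (auto intro!: exI[of _ "c / real (n+1)"])
qed

end
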